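(* There exists a positive constant $C$ such that for all integers $n, m, k, r$ with $2 \leq k \leq m \leq n$ and $r \geq 2$, \[ \binom{n}{m} \binom{m-1}{k-1} \frac{m!}{\Gamma(m/k)^k} \left(\frac{m}{kn}\right)^{mr} \leq C \cdot \min\{m^k, 2^m\} \cdot \left(\frac{1.2}{k^{r-1}}\right)^m . \]
   Context: $\Gamma$ denotes the Gamma function. *)

theory Defs
  imports "HOL-Analysis.Analysis"
begin

end

theory Submission
  imports Defs
begin


lemma ln_ratio_lower:
  fixes u :: real assumes "0 \<le> u" "u < 1"
  shows "2*u + 2*u^3/3 + 2*u^5/5 \<le> ln (1+u) - ln (1-u)"
proof -
  let ?f = "\<lambda>t::real. ln (1+t) - ln (1-t) - (2*t + 2*t^3/3 + 2*t^5/5)"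
  have "?f 0 \<le> ?f u"
  proof (rule DERIV_nonneg_imp_nondecreasing[OF assms(1)])
    fix t :: real assume t: "0 \<le> t" "t \<le> u"
    hence t1: "t < 1" using assms by simp
    have nz: "1 - t^2 > 0" using t t1 by (simp add: abs_square_less_1)
    have "DERIV ?f t :> (1/(1+t) + 1/(1-t) - (2 + 2*t^2 + 2*t^4))"
      using t t1 by - (rule derivative_eq_intros refl | simp)+
    moreover have "1/(1+t) + 1/(1-t) = 2/(1-t^2)"
      using t t1 nz by (simp add: field_simps power2_eq_square)
    moreover have "2/(1-t^2) - (2 + 2*t^2 + 2*t^4) = 2*t^6/(1-t^2)"
    proof -
      have "(2 + 2*t^2 + 2*t^4)*(1-t^2) = 2*(1 - t^6)"
        by (simp add: algebra_simps eval_nat_numeral)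
      hence "(2 + 2*t^2 + 2*t^4) = 2*(1 - t^6)/(1-t^2)"
        using nz by (simp add: field_simps)
      thus ?thesis using nz by (simp add: diff_divide_distrib)
    qed
    moreover have "2*t^6/(1-t^2) \<ge> 0" using t nz by simp
    ultimately show "\<exists>y. DERIV ?f t :> y \<and> 0 \<le> y" by auto
  qed
  thus ?thesis by simp
qed

lemma ln_ratio_upper:
  fixes u :: real assumes "0 \<le> u" "u < 1"
  shows "ln (1+u) - ln (1-u) \<le> 2*u + 2*u^3/(3*(1-u^2))"
proof -
  let ?f = "\<lambda>t::real. 2*t + (2/3)*(t^3/(1-t^2)) - (ln (1+t) - ln (1-t))"
  have "?f 0 \<le> ?f u"
  proof (rule DERIV_nonneg_imp_nondecreasing[OF assms(1)])
    fix t :: real assume t: "0 \<le> t" "t \<le> u"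
    hence t1: "t < 1" using assms by simp
    have nz: "1 - t^2 > 0" using t t1 by (simp add: abs_square_less_1)
    have d: "DERIV (\<lambda>t. t^3/(1-t^2)) t :> ((3*t^2*(1-t^2) + t^3*(2*t))/(1-t^2)^2)"
      using nz by - (rule derivative_eq_intros refl | simp add: power2_eq_square)+
    have "DERIV ?f t :> (2 + (2/3)*((3*t^2*(1-t^2) + t^3*(2*t))/(1-t^2)^2) - (1/(1+t) + 1/(1-t)))"
      using t t1 nz by - (rule derivative_eq_intros refl d | simp)+
    moreover have "1/(1+t) + 1/(1-t) = 2/(1-t^2)"
      using t t1 nz by (simp add: field_simps power2_eq_square)
    moreover have "2 + (2/3)*((3*t^2*(1-t^2) + t^3*(2*t))/(1-t^2)^2) - 2/(1-t^2) = (4/3)*t^4/(1-t^2)^2"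
    proof -
      have e: "(3*t^2*(1-t^2) + t^3*(2*t)) = 3*t^2 - t^4" by (simp add: algebra_simps eval_nat_numeral)
      have g: "\<And>D a::real. D \<noteq> 0 \<Longrightarrow> 2 + (2/3)*(a/D^2) - 2/D = (2*D^2 + (2/3)*a - 2*D)/D^2"
        by (simp add: field_simps power2_eq_square)
      have h: "2*(1-t^2)^2 + (2/3)*(3*t^2 - t^4) - 2*(1-t^2) = (4/3)*t^4"
        by (simp add: algebra_simps eval_nat_numeral)
      have nz': "1 - t^2 \<noteq> 0" using nz by simp
      show ?thesis unfolding e g[of "1-t^2" "3*t^2 - t^4", OF nz'] h by (rule refl)
    qed
    moreover have "(4/3)*t^4/(1-t^2)^2 \<ge> 0" by simp
    ultimately show "\<exists>y. DERIV ?f t :> y \<and> 0 \<le> y" by auto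
  qed
  thus ?thesis by simp
qed

lemma ln_num_facts:
  "2*(1/7) + 2*(1/7)^3/3 + 2*(1/7)^5/5 \<le> 2*ln 2 - ln (3::real)"
  "2*ln 2 - ln (3::real) \<le> 2*(1/7) + 2*(1/7)^3/(3*(1-(1/7)^2))"
  "2*(1/5) + 2*(1/5)^3/3 + 2*(1/5)^5/5 \<le> ln 3 - ln (2::real)"
  "ln 3 - ln (2::real) \<le> 2*(1/5) + 2*(1/5)^3/(3*(1-(1/5)^2))"
  "2*(1/9) + 2*(1/9)^3/3 + 2*(1/9)^5/5 \<le> ln 5 - 2 * ln (2::real)"
  "2*(1/11) + 2*(1/11)^3/3 + 2*(1/11)^5/5 \<le> ln 2 + ln 3 - ln (5::real)"
proof -
  have l8: "ln (8::real) = 3 * ln 2" using ln_realpow[of 2 3] by simp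
  have l4: "ln (4::real) = 2 * ln 2" using ln_realpow[of 2 2] by simp
  have l6: "ln (6::real) = ln 2 + ln 3" using ln_mult[of 2 3] by simp
  have l9: "ln (9::real) = 2 * ln 3" using ln_realpow[of 3 2] by simp
  have l10: "ln (10::real) = ln 2 + ln 5" using ln_mult[of 2 5] by simp
  have l12: "ln (12::real) = ln 4 + ln 3" using ln_mult[of 4 3] by simp
  have a: "ln (1 + 1/7) - ln (1 - 1/7) = 2*ln 2 - ln (3::real)"
    by (simp add: ln_div l8 l6)
  have b: "ln (1 + 1/5) - ln (1 - 1/5) = ln 3 - ln (2::real)"
    by (simp add: ln_div l4 l6)
  have c: "ln (1 + 1/9) - ln (1 - 1/9) = ln 5 - 2*ln (2::real)"
    by (simp add: ln_div l8 l10 l9)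
  have d: "ln (1 + 1/11) - ln (1 - 1/11) = ln 2 + ln 3 - ln (5::real)"
    by (simp add: ln_div l12 l4 l10)
  show "2*(1/7) + 2*(1/7)^3/3 + 2*(1/7)^5/5 \<le> 2*ln 2 - ln (3::real)"
    using ln_ratio_lower[of "1/7"] a by simp
  show "2*ln 2 - ln (3::real) \<le> 2*(1/7) + 2*(1/7)^3/(3*(1-(1/7)^2))"
    using ln_ratio_upper[of "1/7"] a by simp
  show "2*(1/5) + 2*(1/5)^3/3 + 2*(1/5)^5/5 \<le> ln 3 - ln (2::real)"
    using ln_ratio_lower[of "1/5"] b by simp
  show "ln 3 - ln (2::real) \<le> 2*(1/5) + 2*(1/5)^3/(3*(1-(1/5)^2))"
    using ln_ratio_upper[of "1/5"] b by simp
  show "2*(1/9) + 2*(1/9)^3/3 + 2*(1/9)^5/5 \<le> ln 5 - 2 * ln (2::real)"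
    using ln_ratio_lower[of "1/9"] c by simp
  show "2*(1/11) + 2*(1/11)^3/3 + 2*(1/11)^5/5 \<le> ln 2 + ln 3 - ln (5::real)"
    using ln_ratio_lower[of "1/11"] d by simp
qed



lemma ln_dec:
  "28768/100000 \<le> 2*ln 2 - ln (3::real)" "2*ln 2 - ln (3::real) \<le> 28770/100000"
  "40546/100000 \<le> ln 3 - ln (2::real)" "ln 3 - ln (2::real) \<le> 40556/100000"
  "22314/100000 \<le> ln 5 - 2*ln (2::real)" "18232/100000 \<le> ln 2 + ln 3 - ln (5::real)"
proof -
  note N = ln_num_facts
  have "(28768/100000::real) \<le> 2*(1/7) + 2*(1/7)^3/3 + 2*(1/7)^5/5" by (simp add: power_divide)
  thus "28768/100000 \<le> 2*ln 2 - ln (3::real)" using N(1) by linarith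
  have "2*(1/7) + 2*(1/7)^3/(3*(1-(1/7)^2)) \<le> (28770/100000::real)" by (simp add: power_divide)
  thus "2*ln 2 - ln (3::real) \<le> 28770/100000" using N(2) by linarith
  have "(40546/100000::real) \<le> 2*(1/5) + 2*(1/5)^3/3 + 2*(1/5)^5/5" by (simp add: power_divide)
  thus "40546/100000 \<le> ln 3 - ln (2::real)" using N(3) by linarith
  have "2*(1/5) + 2*(1/5)^3/(3*(1-(1/5)^2)) \<le> (40556/100000::real)" by (simp add: power_divide)
  thus "ln 3 - ln (2::real) \<le> 40556/100000" using N(4) by linarith
  have "(22314/100000::real) \<le> 2*(1/9) + 2*(1/9)^3/3 + 2*(1/9)^5/5" by (simp add: power_divide)
  thus "22314/100000 \<le> ln 5 - 2*ln (2::real)" using N(5) by linarith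
  have "(18232/100000::real) \<le> 2*(1/11) + 2*(1/11)^3/3 + 2*(1/11)^5/5" by (simp add: power_divide)
  thus "18232/100000 \<le> ln 2 + ln 3 - ln (5::real)" using N(6) by linarith
qed

lemma G_bound:
  fixes s :: real assumes s0: "0 < s"
  shows "(s-1)*ln(1+s) - s*ln s \<le> 9/50"
proof (cases "1 \<le> s")
  case True
  have a: "ln (1+s) \<le> ln s + 1/s"
  proof -
    have "ln ((1+s)/s) \<le> (1+s)/s - 1" using s0 by (intro ln_le_minus_one) simp
    moreover have "ln ((1+s)/s) = ln (1+s) - ln s" using s0 by (simp add: ln_div)
    moreover have "(1+s)/s - 1 = 1/s" using s0 by (simp add: field_simps)
    ultimately show ?thesis by linarith
  qed
  have b: "1 - 1/s \<le> ln s"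
  proof -
    have "ln (1/s) \<le> 1/s - 1" using s0 by (intro ln_le_minus_one) simp
    moreover have "ln (1/s) = - ln s" using s0 by (simp add: ln_div)
    ultimately show ?thesis by linarith
  qed
  have "(s-1)*ln(1+s) \<le> (s-1)*(ln s + 1/s)" using True a by (intro mult_left_mono) auto
  also have "\<dots> = s*ln s - ln s + 1 - 1/s" using s0 by (simp add: field_simps)
  finally show ?thesis using b by linarith
next
  case False
  hence s1: "s < 1" by simp
  define f where "f = (\<lambda>s::real. s*ln s - (s-1)*ln(1+s))"
  define f' where "f' = (\<lambda>s::real. ln s + 1 - ln (1+s) - (s-1)/(1+s))"
  define f'' where "f'' = (\<lambda>s::real. 1/s - 1/(1+s) - 2/(1+s)^2)"
  let ?C = "{0<..<(1::real)}"
  have tan: "f' x * (y - x) \<le> f y - f x" if "x \<in> ?C" "y \<in> ?C" for x y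
  proof (rule f''_imp_f'[of ?C f f' f''])
    show "convex ?C" by simp
    show "DERIV f z :> f' z" if "z \<in> ?C" for z
      using that unfolding f_def f'_def
      by - (rule derivative_eq_intros refl | simp add: field_simps)+
    show "DERIV f' z :> f'' z" if "z \<in> ?C" for z
      using that unfolding f'_def f''_def
      by - (rule derivative_eq_intros refl | simp add: field_simps power2_eq_square)+
    show "f'' z \<ge> 0" if "z \<in> ?C" for z
    proof -
      have z: "0 < z" "z < 1" using that by auto
      have nz: "z \<noteq> 0" "1 + z \<noteq> 0" "z + z*z \<noteq> 0" "z*(1+z)^2 \<noteq> 0"
      proof -
        have "0 < z*z" using z by simp
        hence "z + z*z > 0" using z by linarith
        thus "z \<noteq> 0" "1 + z \<noteq> 0" "z + z*z \<noteq> 0" "z*(1+z)^2 \<noteq> 0" using z by auto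
      qed
      have g: "\<And>z w::real. z \<noteq> 0 \<Longrightarrow> w \<noteq> 0 \<Longrightarrow> 1/z - 1/w - 2/w^2 = (w^2 - z*w - 2*z)/(z*w^2)"
        by (simp add: field_simps power2_eq_square)
      have h: "(1+z)^2 - z*(1+z) - 2*z = 1 - z" by (simp add: algebra_simps power2_eq_square)
      have "f'' z = (1 - z)/(z*(1+z)^2)" unfolding f''_def g[OF nz(1) nz(2)] h ..
      thus ?thesis using z by simp
    qed
  qed (use that in auto)
  have sC: "s \<in> ?C" using s0 s1 by simp
  have l4: "ln (4::real) = 2 * ln 2" using ln_realpow[of 2 2] by simp
  have l5: "ln (5/4::real) = ln 5 - 2 * ln 2" by (simp add: ln_div l4)
  have l43: "ln (4/3::real) = 2 * ln 2 - ln 3" by (simp add: ln_div l4)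
  have fq: "f (1/4) = (3/4)*ln 5 - 2*ln 2" unfolding f_def
    by (simp add: ln_div l4 l5 algebra_simps)
  have f'q: "f' (1/4) = 8/5 - ln 5" unfolding f'_def
    by (simp add: ln_div l4 l5 algebra_simps)
  have ft: "f (1/3) = (4/3)*ln 2 - ln 3" unfolding f_def
    by (simp add: ln_div l4 l43 algebra_simps)
  have f't: "f' (1/3) = 3/2 - 2*ln 2" unfolding f'_def
    by (simp add: ln_div l4 l43 algebra_simps)
  have G: "(s-1)*ln(1+s) - s*ln s = - f s" unfolding f_def by simp
  note N = ln_dec
  have "- f s \<le> 9/50"
  proof (cases "s \<le> 29/100")
    case True
    define P where "P = (ln 5 - 8/5) * (s - 1/4)"
    have t: "f' (1/4) * (s - 1/4) \<le> f s - f (1/4)" using tan[of "1/4" s] sC by simp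
    have t': "- P \<le> f s - f (1/4)" using t unfolding P_def f'q by (simp add: algebra_simps)
    have p: "P \<le> (ln 5 - 8/5) * (1/25)"
      unfolding P_def using True N by (intro mult_left_mono) auto
    show ?thesis using t' p fq N by (simp add: field_simps)
  next
    case False
    define P where "P = (3/2 - 2*ln 2) * (1/3 - s)"
    have t: "f' (1/3) * (s - 1/3) \<le> f s - f (1/3)" using tan[of "1/3" s] sC by simp
    have e: "(3/2 - 2*ln 2) * (s - 1/3) = - ((3/2 - 2*ln 2) * (1/3 - s))" by (metis minus_diff_eq mult_minus_right)
    have t': "- P \<le> f s - f (1/3)" using t unfolding f't P_def by (simp only: e)
    have p: "P \<le> (3/2 - 2*ln 2) * (13/300)"
      unfolding P_def using False N by (intro mult_left_mono) auto
    show ?thesis using t' p ft N by (simp add: field_simps)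
  qed
  thus ?thesis using G by linarith
qed

lemma ln_fact_upper:
  assumes "1 \<le> n"
  shows "ln (fact n :: real) \<le> 1 + ln (real n) + real n * ln (real n) - real n"
  using assms
proof (induction n rule: nat_induct_at_least)
  case base then show ?case by simp
next
  case (Suc n)
  have n: "real n \<ge> 1" using Suc by simp
  have e: "ln (fact (Suc n) :: real) = ln (real n + 1) + ln (fact n)"
    by (simp add: ln_mult add.commute)
  have k: "ln (real n / (real n + 1)) \<le> real n / (real n + 1) - 1"
    using n by (intro ln_le_minus_one) simp
  have k2: "ln (real n / (real n + 1)) = ln (real n) - ln (real n + 1)"
    using n by (simp add: ln_div)
  have k3: "real n / (real n + 1) - 1 = - 1/(real n + 1)" using n by (simp add: field_simps)
  have "(real n + 1) * (ln (real n) - ln (real n + 1)) \<le> (real n + 1) * (- 1/(real n + 1))"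
    using k k2 k3 n by (intro mult_left_mono) auto
  hence "(real n + 1) * (ln (real n) - ln (real n + 1)) \<le> -1" using n by simp
  hence key: "real n * ln (real n) + ln (real n) + 1 \<le> real n * ln (real n + 1) + ln (real n + 1)"
    by (simp add: algebra_simps)
  show ?case using Suc.IH e key by (simp add: algebra_simps)
qed

lemma ln_fact_lower:
  assumes "1 \<le> n"
  shows "11/12 + ln (real n)/2 + real n * ln (real n) - real n + 1/(12*real n) \<le> ln (fact n :: real)"
  using assms
proof (induction n rule: nat_induct_at_least)
  case base then show ?case by simp
next
  case (Suc n)
  have n: "real n \<ge> 1" using Suc by simp
  have e: "ln (fact (Suc n) :: real) = ln (real n + 1) + ln (fact n)"
    by (simp add: ln_mult add.commute)
  define u where "u = 1 / (2 * real n + 1)"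
  have u0: "0 \<le> u" "u < 1" using n unfolding u_def by (auto simp: field_simps)
  have up: "ln (1+u) - ln (1-u) \<le> 2*u + 2*u^3/(3*(1-u^2))" by (rule ln_ratio_upper[OF u0])
  have "ln (1+u) - ln (1-u) = ln ((1+u)/(1-u))" using u0 by (simp add: ln_div)
  also have "(1+u)/(1-u) = (real n + 1) / real n"
  proof -
    have d: "2 * real n + 1 \<noteq> 0" "real n \<noteq> 0" using n by auto
    have e1: "1 + u = (2*real n + 2)/(2*real n + 1)" and e2: "1 - u = (2*real n)/(2*real n + 1)"
      unfolding u_def using d by (simp_all add: field_simps)
    have g: "\<And>a b c::real. c \<noteq> 0 \<Longrightarrow> (a/c)/(b/c) = a/b" by simp
    have h: "(2*real n + 2)/(2*real n) = (real n + 1)/real n" using d by (simp add: field_simps)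
    show ?thesis unfolding e1 e2 g[OF d(1)] h ..
  qed
  also have "ln ((real n + 1) / real n) = ln (real n + 1) - ln (real n)" using n by (simp add: ln_div)
  finally have lu: "ln (real n + 1) - ln (real n) \<le> 2*u + 2*u^3/(3*(1-u^2))" using up by simp
  have iden: "(real n + 1/2) * (2*u + 2*u^3/(3*(1-u^2))) = 1 + 1/(12*real n) - 1/(12*(real n + 1))"
  proof -
    define a where "a = 2*real n + 1"
    have a0: "a \<noteq> 0" "a > 1" unfolding a_def using n by auto
    have ua: "u = 1/a" unfolding u_def a_def ..
    have a2: "a^2 - 1 = 4*real n*(real n + 1)" unfolding a_def by (simp add: algebra_simps power2_eq_square)
    have a2n: "a^2 - 1 \<noteq> 0" using a2 n by simp
    have s1: "2*u + 2*u^3/(3*(1-u^2)) = 2/a + 2/(3*a*(a^2-1))"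
      unfolding ua using a0 a2n by (simp add: field_simps power2_eq_square eval_nat_numeral)
    have na: "real n + 1/2 = a/2" unfolding a_def by simp
    have nn: "real n \<noteq> 0" "real n + 1 \<noteq> 0" using n by auto
    have gg: "\<And>a N::real. a \<noteq> 0 \<Longrightarrow> N \<noteq> 0 \<Longrightarrow> (a/2) * (2/a + 2/(3*a*(4*N))) = 1 + 1/(12*N)"
      by (simp add: field_simps)
    have c1: "(a/2) * (2/a + 2/(3*a*(4*real n*(real n + 1)))) = 1 + 1/(12*real n*(real n + 1))"
      using gg[of a "real n * (real n + 1)"] a0 nn by (simp add: mult.assoc)
    have c2: "1 + 1/(12*real n) - 1/(12*(real n + 1)) = 1 + 1/(12*real n*(real n + 1))"
    proof -
      have "\<And>N::real. N > 0 \<Longrightarrow> 1/(12*N) - 1/(12*(N+1)) = 1/(12*N*(N+1))" by (simp add: field_simps)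
      thus ?thesis using n by simp
    qed
    show ?thesis unfolding s1 na a2 by (rule trans[OF c1 c2[symmetric]])
  qed
  have "(real n + 1/2) * (ln (real n + 1) - ln (real n)) \<le> (real n + 1/2) * (2*u + 2*u^3/(3*(1-u^2)))"
    using lu n by (intro mult_left_mono) auto
  note m = this
  have key: "(real n + 1/2) * (ln (real n + 1) - ln (real n)) \<le> 1 + 1/(12*real n) - 1/(12*(real n + 1))"
    using m by (simp only: iden)
  show ?case using Suc.IH e key by (simp add: algebra_simps)
qed

lemma ln_Gamma_lower:
  fixes x :: real assumes x1: "1 \<le> x"
  shows "11/12 + ln (x/2)/2 + x*ln x - x \<le> ln (Gamma (x+1))"
proof -
  define q where "q = nat \<lfloor>x\<rfloor>"
  have qx: "real q \<le> x" "x < real q + 1" unfolding q_def using x1 by linarith+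
  have q1: "1 \<le> q" unfolding q_def using x1 by linarith
  define b where "b = x - real q"
  have b: "0 \<le> b" "b < 1" unfolding b_def using qx by auto
  have conv: "(ln \<circ> Gamma) ((1-b) *\<^sub>R (x+1) + b *\<^sub>R x) \<le> (1-b) * (ln \<circ> Gamma) (x+1) + b * (ln \<circ> Gamma) x"
    by (rule convex_onD[OF log_convex_Gamma_real]) (use b x1 in auto)
  have pt: "(1-b) *\<^sub>R (x+1) + b *\<^sub>R x = 1 + real q" unfolding b_def by (simp add: algebra_simps)
  have gq: "Gamma (1 + real q) = fact q" using Gamma_fact[of q] by simp
  have xnp: "x \<notin> \<int>\<^sub>\<le>\<^sub>0" using x1 by (auto elim!: nonpos_Ints_cases)
  have gx: "Gamma (x+1) = x * Gamma x" using Gamma_plus1[OF xnp] .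
  have lgx: "ln (Gamma (x+1)) = ln x + ln (Gamma x)" proof -
    have gp: "Gamma x > 0" using x1 by simp
    have "ln (x * Gamma x) = ln x + ln (Gamma x)" using ln_mult[of x "Gamma x"] x1 gp by simp
    thus ?thesis using gx by simp
  qed
  have A: "ln (fact q) \<le> ln (Gamma (x+1)) - b * ln x"
    using conv pt gq lgx by (simp add: algebra_simps)
  have B: "11/12 + ln (real q)/2 + real q * ln (real q) - real q + 1/(12*real q) \<le> ln (fact q)"
    by (rule ln_fact_lower[OF q1])
  have C0: "0 \<le> 1/(12*real q)" by simp
  have q1r: "1 \<le> real q" using q1 by simp
  have "x/2 \<le> real q" using qx q1r by linarith
  hence D: "ln (x/2) \<le> ln (real q)" using x1 by simp
  have E1: "ln (x / real q) \<le> x / real q - 1" using q1 x1 by (intro ln_le_minus_one) simp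
  have E2: "ln (x / real q) = ln x - ln (real q)" using q1 x1 by (simp add: ln_div)
  have E3: "x / real q - 1 = b / real q" unfolding b_def using q1 by (simp add: field_simps)
  have "real q * (ln x - ln (real q)) \<le> real q * (b / real q)" using E1 E2 E3 by (intro mult_left_mono) auto
  hence E: "real q * ln x - real q * ln (real q) \<le> b" using q1 by (simp add: algebra_simps)
  have xe: "x * ln x = real q * ln x + b * ln x" unfolding b_def by (simp add: algebra_simps)
  show ?thesis using A B C0 D E xe b_def by linarith
qed

lemma binom_term_le:
  fixes p :: real assumes "0 \<le> p" "p \<le> 1" "j \<le> n"
  shows "real (n choose j) * p^j * (1-p)^(n-j) \<le> 1"
proof -
  have "(p + (1-p))^n = (\<Sum>k\<le>n. real (n choose k) * p^k * (1-p)^(n-k))"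
    by (rule binomial_ring)
  hence s: "(\<Sum>k\<le>n. real (n choose k) * p^k * (1-p)^(n-k)) = 1" by simp
  have "real (n choose j) * p^j * (1-p)^(n-j) \<le> (\<Sum>k\<le>n. real (n choose k) * p^k * (1-p)^(n-k))"
    by (rule member_le_sum) (use assms in auto)
  thus ?thesis using s by simp
qed



lemma exp_nat_ln: "0 < (y::real) \<Longrightarrow> exp (real j * ln y) = y ^ j"
  by (simp add: ln_realpow[symmetric])

lemma A_bound:
  fixes n m r :: nat assumes m1: "1 \<le> m" and mn: "m \<le> n" and r2: "2 \<le> r"
  shows "real (n choose m) * (real m / real n)^(m*r) \<le> exp (9/50 * real m)"
proof -
  define p where "p = real m / real n"
  have n1: "1 \<le> n" using m1 mn by simp
  have p0: "0 < p" "p \<le> 1" unfolding p_def using m1 mn by auto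
  have pw: "p^(m*r) \<le> p^(2*m)"
    by (rule power_decreasing) (use r2 p0 in auto)
  have "real (n choose m) * p^(m*r) \<le> real (n choose m) * p^(2*m)"
    using pw by (intro mult_left_mono) auto
  also have "real (n choose m) * p^(2*m) \<le> exp (9/50 * real m)"
  proof (cases "m = n")
    case True
    hence "p = 1" unfolding p_def using n1 by simp
    thus ?thesis using True by simp
  next
    case False
    hence mn': "m < n" using mn by simp
    have p1: "p < 1" unfolding p_def using mn' m1 by simp
    have bt: "real (n choose m) * p^m * (1-p)^(n-m) \<le> 1"
      by (rule binom_term_le) (use p0 mn in auto)
    have q0: "0 < (1-p)^(n-m)" using p1 by simp
    have "real (n choose m) * p^(2*m) = (real (n choose m) * p^m * (1-p)^(n-m)) * (p^m / (1-p)^(n-m))"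
      using q0 p1 by (simp add: power_mult field_simps power2_eq_square mult_2 power_add)
    also have "\<dots> \<le> 1 * (p^m / (1-p)^(n-m))"
      using bt q0 p0 by (intro mult_right_mono) auto
    also have "p^m / (1-p)^(n-m) = exp (real m * ln p - real (n-m) * ln (1-p))"
      using p0 p1 by (simp add: exp_diff exp_nat_ln)
    also have "real m * ln p - real (n-m) * ln (1-p) \<le> 9/50 * real m"
    proof -
      define s where "s = real (n-m) / real m"
      have s0: "0 < s" unfolding s_def using mn' m1 by simp
      have nm: "real (n-m) = real m * s" unfolding s_def using m1 by simp
      have lp: "ln p = ln (real m) - ln (real n)" unfolding p_def using m1 n1 by (simp add: ln_div)
      have "1 - p = real (n-m) / real n" unfolding p_def using n1 mn by (simp add: field_simps of_nat_diff)
      hence lq: "ln (1-p) = ln (real (n-m)) - ln (real n)" using mn' n1 by (simp add: ln_div)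
      have "1 + s = real n / real m" unfolding s_def using m1 mn by (simp add: field_simps of_nat_diff)
      hence l1s: "ln (1+s) = ln (real n) - ln (real m)" using m1 n1 by (simp add: ln_div)
      have ls: "ln s = ln (real (n-m)) - ln (real m)" unfolding s_def using mn' m1 by (simp add: ln_div)
      have "real m * ln p - real (n-m) * ln (1-p) = real m * ((s-1)*ln(1+s) - s*ln s)"
        unfolding lp lq l1s ls nm by (simp add: algebra_simps)
      also have "\<dots> \<le> real m * (9/50)" using G_bound[OF s0] by (intro mult_left_mono) auto
      finally show ?thesis by simp
    qed
    hence "exp (real m * ln p - real (n-m) * ln (1-p)) \<le> exp (9/50 * real m)" by simp
    finally show ?thesis by simp
  qed
  finally show ?thesis unfolding p_def .
qed

lemma E_bound:
  fixes m k :: nat assumes k1: "1 \<le> k" and km: "k \<le> m"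
  shows "ln (fact m) - real k * ln (Gamma (real m / real k)) - real m * ln (real k)
     \<le> 1 + ln (real m) + real k / 2 * (ln (real m / real k) - 11/6 + ln 2)"
proof -
  define x where "x = real m / real k"
  have m1: "1 \<le> m" using k1 km by simp
  have x1: "1 \<le> x" unfolding x_def using k1 km by simp
  have kx: "real k * x = real m" unfolding x_def using k1 by simp
  have kxl: "real k * (x * ln x) = real m * ln x" using kx by (simp add: mult.assoc[symmetric])
  have lm: "ln (real m) = ln x + ln (real k)" unfolding x_def using k1 m1 by (simp add: ln_div)
  have mlm: "real m * ln (real m) = real m * ln x + real m * ln (real k)" unfolding lm by (simp add: distrib_left)
  have gl: "11/12 + ln (x/2)/2 + x*ln x - x \<le> ln (Gamma (x+1))" by (rule ln_Gamma_lower[OF x1])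
  have xnp: "x \<notin> \<int>\<^sub>\<le>\<^sub>0" using x1 by (auto elim!: nonpos_Ints_cases)
  have gp: "Gamma x > 0" using x1 by simp
  have "ln (Gamma (x+1)) = ln (x * Gamma x)" using Gamma_plus1[OF xnp] by simp
  also have "\<dots> = ln x + ln (Gamma x)" using ln_mult[of x "Gamma x"] x1 gp by simp
  finally have lg1: "ln (Gamma (x+1)) = ln x + ln (Gamma x)" .
  have lx2: "ln (x/2) = ln x - ln 2" using x1 by (simp add: ln_div)
  have low: "11/12 + ln x/2 - ln 2/2 + x*ln x - x - ln x \<le> ln (Gamma x)" using gl lg1 lx2 by linarith
  have "real k * (11/12 + ln x/2 - ln 2/2 + x*ln x - x - ln x) \<le> real k * ln (Gamma x)"
    using low by (intro mult_left_mono) auto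
  moreover have "real k * (11/12 + ln x/2 - ln 2/2 + x*ln x - x - ln x)
     = 11/12 * real k + (real k * ln x)/2 - (real k * ln 2)/2 + real k * (x*ln x) - real k * x - real k * ln x"
    by (simp add: field_simps)
  ultimately have K: "11/12 * real k + (real k * ln x)/2 - (real k * ln 2)/2 + real m * ln x - real m - real k * ln x \<le> real k * ln (Gamma x)"
    using kx kxl by linarith
  have F: "ln (fact m) \<le> 1 + ln (real m) + real m * ln (real m) - real m" by (rule ln_fact_upper[OF m1])
  have R: "real k / 2 * (ln x - 11/6 + ln 2) = (real k * ln x)/2 - 11/12 * real k + (real k * ln 2)/2"
    by (simp add: field_simps)
  show ?thesis unfolding x_def[symmetric] using K F R mlm by linarith
qed

lemma bracket_bound:
  fixes m k :: nat assumes k1: "1 \<le> k" and km: "k \<le> m"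
  shows "real k / 2 * (ln (real m) - 3 * ln (real k) + 1/6 + ln 2)
    \<le> real m / 2000 + exp ((ln 1000 + 1/6 + ln 2)/2)"
proof -
  define B :: real where "B = (ln 1000 + 1/6 + ln 2)/2"
  have m1: "1 \<le> m" using k1 km by simp
  have kp: "0 < real k" using k1 by simp
  have a: "ln (real m / (1000 * real k)) \<le> real m / (1000 * real k) - 1"
    using k1 m1 by (intro ln_le_minus_one) simp
  have a': "ln (real m / (1000 * real k)) = ln (real m) - ln 1000 - ln (real k)"
    using k1 m1 by (simp add: ln_div ln_mult)
  have b: "ln (exp B / real k) \<le> exp B / real k - 1"
    using k1 by (intro ln_le_minus_one) simp
  have b': "ln (exp B / real k) = B - ln (real k)" using k1 by (simp add: ln_div)
  have A: "real k / 2 * (ln (real m) - ln 1000 - ln (real k)) \<le> real k / 2 * (real m / (1000 * real k) - 1)"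
    using a a' kp by (intro mult_left_mono) auto
  have A': "real k / 2 * (real m / (1000 * real k) - 1) = real m / 2000 - real k / 2"
    using kp by (simp add: field_simps)
  have Bk: "real k * (B - ln (real k)) \<le> real k * (exp B / real k - 1)"
    using b b' kp by (intro mult_left_mono) auto
  have Bk': "real k * (exp B / real k - 1) = exp B - real k" using kp by (simp add: field_simps)
  have split: "real k / 2 * (ln (real m) - 3 * ln (real k) + 1/6 + ln 2)
     = real k / 2 * (ln (real m) - ln 1000 - ln (real k)) + real k * (B - ln (real k))"
    unfolding B_def by (simp add: field_simps)
  show ?thesis unfolding B_def[symmetric] using A A' Bk Bk' split kp by linarith
qed

lemma exp_17_6: "14 \<le> exp (17/6::real)"
proof -
  have "exp (17/6::real) = exp (17/192) ^ 32"
    using exp_of_nat_mult[of 32 "17/192::real"] by simp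
  moreover have "(1 + 17/192::real) ^ 32 \<le> exp (17/192) ^ 32"
    by (rule power_mono) (use exp_ge_add_one_self[of "17/192::real"] in auto)
  moreover have "(14::real) \<le> (1 + 17/192) ^ 32" by (simp add: power_divide)
  ultimately show ?thesis by linarith
qed



theorem lemma2:
  shows "\<exists>C::real. C > 0 \<and>
    (\<forall>n m k r :: nat. 2 \<le> k \<and> k \<le> m \<and> m \<le> n \<and> 2 \<le> r \<longrightarrow>
      real (n choose m) * real ((m - 1) choose (k - 1)) *
        (fact m / Gamma (real m / real k) ^ k) *
        (real m / (real k * real n)) ^ (m * r)
      \<le> C * min (real m ^ k) (2 ^ m) * ((6/5) / real k ^ (r - 1)) ^ m)"
proof -
  define B :: real where "B = (ln 1000 + 1/6 + ln 2)/2"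
  define K :: real where "K = 2 + exp B + ln 2000"
  show ?thesis
  proof (intro exI[of _ "exp K"] conjI allI impI)
    show "exp K > 0" by simp
    fix n m k r :: nat assume H: "2 \<le> k \<and> k \<le> m \<and> m \<le> n \<and> 2 \<le> r"
    have k2: "2 \<le> k" and km: "k \<le> m" and mn: "m \<le> n" and r2: "2 \<le> r" using H by auto
    have k1: "1 \<le> k" and m1: "1 \<le> m" and n1: "1 \<le> n" using k2 km mn by auto
    have kp: "0 < real k" and mp: "0 < real m" and np: "0 < real n" using k1 m1 n1 by auto
    define x where "x = real m / real k"
    have x1: "1 \<le> x" unfolding x_def using km k1 by simp
    have gp: "Gamma x > 0" using x1 by simp
    define A where "A = real (n choose m) * (real m / real n)^(m*r)"
    define Cb where "Cb = real ((m-1) choose (k-1))"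
    define core where "core = A * Cb * (fact m / (Gamma x ^ k * real k ^ m))"
    have Ap: "A > 0" unfolding A_def using mn mp np by simp
    have Cbp: "Cb > 0" unfolding Cb_def using km k1 by simp
    have corep: "core > 0" unfolding core_def using Ap Cbp gp kp by simp
    have lcore: "ln core = ln A + ln Cb + ln (fact m) - real k * ln (Gamma x) - real m * ln (real k)"
      unfolding core_def using Ap Cbp gp kp
      by (simp add: ln_mult ln_div ln_realpow)
    have lA: "ln A \<le> 9/50 * real m"
    proof -
      have "A \<le> exp (9/50 * real m)" unfolding A_def by (rule A_bound[OF m1 mn r2])
      thus ?thesis using Ap by (metis exp_gt_zero ln_exp ln_le_cancel_iff)
    qed
    have lE: "ln (fact m) - real k * ln (Gamma x) - real m * ln (real k)
      \<le> 1 + ln (real m) + real k / 2 * (ln x - 11/6 + ln 2)"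
      unfolding x_def by (rule E_bound[OF k1 km])
    have lnm: "ln (real m) \<le> real m / 2000 + ln 2000"
    proof -
      have "ln (real m / 2000) \<le> real m / 2000 - 1" using mp by (intro ln_le_minus_one) simp
      moreover have "ln (real m / 2000) = ln (real m) - ln 2000" using mp by (simp add: ln_div)
      ultimately show ?thesis by linarith
    qed
    have lk: "ln (real k) \<le> ln (real m)" using km kp by simp
    have lx: "ln x = ln (real m) - ln (real k)" unfolding x_def using kp mp by (simp add: ln_div)
    have l65: "ln (6/5::real) = ln 2 + ln 3 - ln 5"
    proof -
      have "ln (6::real) = ln 2 + ln 3" using ln_mult[of 2 3] by simp
      thus ?thesis by (simp add: ln_div)
    qed
    note D = ln_dec
    have m65: "real m * (18232/100000) \<le> real m * (ln 2 + ln 3 - ln 5)"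
      using D mp by (intro mult_left_mono) auto
    have absorb: "real k * real ((m choose k)) = real m * Cb"
    proof -
      have "Suc (k-1) * (m choose Suc (k-1)) = m * ((m - 1) choose (k-1))" by (rule binomial_absorption)
      hence "k * (m choose k) = m * ((m - 1) choose (k-1))" using k1 by simp
      thus ?thesis unfolding Cb_def by (metis of_nat_mult)
    qed
    have mkp: "real (m choose k) > 0" using km by simp
    have S1: "ln core \<le> real k * ln (real m) + real m * ln (6/5) + K"
    proof -
      have bfp: "real (m choose k) * fact k \<le> real m ^ k"
        using binomial_fact_pow[of m k] by (metis of_nat_fact of_nat_le_iff of_nat_mult of_nat_power)
      have "ln (real (m choose k) * fact k) \<le> ln (real m ^ k)"
      proof -
        have pos: "0 < real (m choose k) * fact k" using mkp by simp
        have pos2: "0 < real m ^ k" using mp by simp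
        show ?thesis using bfp pos pos2 by (simp only: ln_le_cancel_iff)
      qed
      hence c1: "ln (real (m choose k)) + ln (fact k) \<le> real k * ln (real m)"
        using mkp mp by (simp add: ln_mult ln_realpow)
      have fl: "11/12 + ln (real k)/2 + real k * ln (real k) - real k + 1/(12*real k) \<le> ln (fact k)"
        by (rule ln_fact_lower[OF k1])
      have lk0: "0 \<le> ln (real k)" using k1 by simp
      have c2: "ln (real k) + ln (real (m choose k)) = ln (real m) + ln Cb"
      proof -
        have "ln (real k * real (m choose k)) = ln (real m * Cb)" using absorb by simp
        thus ?thesis using ln_mult[of "real k" "real (m choose k)"] ln_mult[of "real m" Cb] kp mkp mp Cbp by simp
      qed
      have br: "real k / 2 * (ln (real m) - 3 * ln (real k) + 1/6 + ln 2) \<le> real m / 2000 + exp B"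
        unfolding B_def by (rule bracket_bound[OF k1 km])
      have eqb: "real k / 2 * (ln x - 11/6 + ln 2) = real k / 2 * (ln (real m) - 3 * ln (real k) + 1/6 + ln 2) + real k * ln (real k) - real k"
        unfolding lx by (simp add: field_simps)
      have ik: "0 \<le> 1/(12*real k)" by simp
      show ?thesis unfolding l65 K_def
        using lcore lA lE lnm lk c1 fl lk0 c2 br eqb m65 ik by linarith
    qed
    have S2: "ln core \<le> real m * ln 2 + real m * ln (6/5) + K"
    proof -
      have bt: "real (m choose k) * (2/5)^k * (1 - 2/5)^(m-k) \<le> 1"
        by (rule binom_term_le) (use km in auto)
      have "ln (real (m choose k) * (2/5)^k * (3/5)^(m-k)) \<le> 0" using bt mkp by simp
      hence "ln (real (m choose k)) + real k * ln (2/5) + real (m-k) * ln (3/5) \<le> 0"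
        using mkp by (simp add: ln_mult ln_realpow)
      moreover have "ln (2/5::real) = ln 2 - ln 5" by (simp add: ln_div)
      moreover have "ln (3/5::real) = ln 3 - ln 5" by (simp add: ln_div)
      moreover have "real (m-k) = real m - real k" using km by simp
      ultimately have c1: "ln (real (m choose k)) \<le> real m * ln 5 - real m * ln 3 + real k * ln 3 - real k * ln 2"
        by (simp add: algebra_simps)
      have "real m * Cb \<le> real m * real (m choose k)"
        using absorb km mkp by (metis mult_right_mono of_nat_0_le_iff of_nat_le_iff)
      hence "Cb \<le> real (m choose k)" using mp by simp
      hence c2: "ln Cb \<le> ln (real (m choose k))" using Cbp mkp by simp
      define a :: real where "a = 2 * ln 3 - ln 2 - 11/6"
      have la: "ln (x * exp (a - 1)) \<le> x * exp (a - 1) - 1" using x1 by (intro ln_le_minus_one) simp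
      hence la': "ln x + a \<le> x * exp (a - 1)" using x1 by (simp add: ln_mult)
      have "real k / 2 * (ln x + a) \<le> real k / 2 * (x * exp (a - 1))" using la' kp by (intro mult_left_mono) auto
      also have "real k / 2 * (x * exp (a - 1)) = real m / 2 * exp (a - 1)" unfolding x_def using kp by simp
      also have "exp (a - 1) \<le> 9/28"
      proof -
        have "exp (a - 1) = exp (2 * ln 3) / exp (ln 2) / exp (17/6)" unfolding a_def
          by (simp add: exp_diff)
        also have "\<dots> = 9/2 / exp (17/6)"
        proof -
          have "exp (2 * ln (3::real)) = 9" using exp_nat_ln[of 3 2] by simp
          thus ?thesis by simp
        qed
        also have "\<dots> \<le> 9/2 / 14" using exp_17_6 by (intro divide_left_mono) auto
        finally show ?thesis by simp
      qed
      hence "real m / 2 * exp (a - 1) \<le> real m / 2 * (9/28)" using mp by (intro mult_left_mono) auto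
      finally have ka: "real k / 2 * (ln x + a) \<le> real m * (9/56)" by simp
      have eqa: "real k / 2 * (ln x - 11/6 + ln 2) = real k / 2 * (ln x + a) - real k * ln 3 + real k * ln 2"
        unfolding a_def by (simp add: field_simps)
      have m2: "real m * (18232/100000) \<le> real m * (ln 2 + ln 3 - ln 5)" using m65 .
      have eB: "0 \<le> exp B" by simp
      have dm: "real m * (ln 2 + ln 3 - ln 5) = real m * ln 2 + real m * ln 3 - real m * ln 5"
        by (simp add: algebra_simps)
      have l2k: "0 \<le> ln (2000::real)" by simp
      show ?thesis unfolding l65 K_def
        using lcore lA lE lnm c1 c2 ka eqa m2 eB dm l2k by linarith
    qed
    have core1: "core \<le> exp K * real m ^ k * (6/5)^m"
    proof -
      have "core = exp (ln core)" using corep by simp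
      also have "\<dots> \<le> exp (real k * ln (real m) + real m * ln (6/5) + K)" using S1 by simp
      also have "\<dots> = exp K * real m ^ k * (6/5)^m"
        using mp by (simp add: exp_add exp_nat_ln)
      finally show ?thesis .
    qed
    have core2: "core \<le> exp K * 2 ^ m * (6/5)^m"
    proof -
      have "core = exp (ln core)" using corep by simp
      also have "\<dots> \<le> exp (real m * ln 2 + real m * ln (6/5) + K)" using S2 by simp
      also have "\<dots> = exp K * 2 ^ m * (6/5)^m"
        by (simp add: exp_add exp_nat_ln)
      finally show ?thesis .
    qed
    have coremin: "core \<le> exp K * min (real m ^ k) (2 ^ m) * (6/5)^m"
      using core1 core2 by (cases "real m ^ k \<le> 2 ^ m") (auto simp: min_def)
    define P where "P = real k ^ ((r-1)*m)"
    have Pp: "P > 0" unfolding P_def using kp by simp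
    have mr: "m * r = m + (r-1)*m" using r2 by (simp add: algebra_simps)
    have lhs: "real (n choose m) * real ((m - 1) choose (k - 1)) *
        (fact m / Gamma (real m / real k) ^ k) *
        (real m / (real k * real n)) ^ (m * r) = core / P"
    proof -
      have "(real m / (real k * real n)) ^ (m * r) = (real m / real n)^(m*r) / (real k ^ m * P)"
        unfolding P_def by (simp add: power_divide power_mult_distrib mr power_add field_simps)
      note eq = this
      have gen: "\<And>a b c d g h P::real. g \<noteq> 0 \<Longrightarrow> h \<noteq> 0 \<Longrightarrow> P \<noteq> 0 \<Longrightarrow>
          a*b*(c/g)*(d/(h*P)) = a*d*b*(c/(g*h))/P" by (simp add: field_simps)
      have g0: "Gamma (real m / real k) ^ k \<noteq> 0" using gp unfolding x_def by simp
      show ?thesis unfolding eq core_def A_def Cb_def x_def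
        by (rule gen) (use g0 kp Pp in auto)
    qed
    have rhs: "exp K * min (real m ^ k) (2 ^ m) * ((6/5) / real k ^ (r - 1)) ^ m
       = exp K * min (real m ^ k) (2 ^ m) * (6/5)^m / P"
      unfolding P_def by (simp add: power_divide power_mult[symmetric] mult.commute)
    show "real (n choose m) * real ((m - 1) choose (k - 1)) *
        (fact m / Gamma (real m / real k) ^ k) *
        (real m / (real k * real n)) ^ (m * r)
      \<le> exp K * min (real m ^ k) (2 ^ m) * ((6/5) / real k ^ (r - 1)) ^ m"
      unfolding lhs rhs using coremin Pp by (intro divide_right_mono) auto
  qed
qed


end
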